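(* Let $T$, $E$ ($\mu$-spanning and $\alpha$-H\"olderian with constant $C(E)$, $\alpha\in(0,1]$), $R$, $(e_k)$ and $\sigma_k$ be as in the context. For every positive integer $n$, $$\sum_{k=1}^{\infty}\sigma_k^4\|T^ne_k\|^2\le\frac{C(E)^2\pi^{2\alpha}}{4n^{2\alpha}}\|E\|_2^2.$$
   Context: $\mathcal{H}$ complex separable infinite-dimensional Hilbert space (inner product linear in second variable), $T$ bounded, $\mathbb{T}$ unit circle, $\mu$ normalized Lebesgue measure. $E:\mathbb{T}\to\mathcal{H}$ bounded, $TE(\lambda)=\lambda E(\lambda)$, $\mu$-spanning ($\{E(\lambda):\lambda\in A\}$ spans a dense subspace whenever $\mu(A)=1$), $\|E(e^{i\theta})-E(e^{i\theta'})\|\le C(E)|\theta-\theta'|^\alpha$; $\|E\|_2^2=\int\|E(\lambda)\|^2d\mu$. $R$ is the positive trace-class operator with $\langle Rx,y\rangle=\int\langle x,E(\lambda)\rangle\overline{\langle y,E(\lambda)\rangle}d\mu(\lambda)$; $(e_k)_{k\ge1}$ is an orthonormal basis of $\mathcal{H}$ of eigenvectors of $R$ with $Re_k=2\sigma_k^2e_k$. *)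

theory Defs
  imports "HOL-Analysis.Analysis"
begin

class complex_vector = real_vector +
  fixes scaleC :: "complex \<Rightarrow> 'a \<Rightarrow> 'a" (infixr "*\<^sub>C" 75)
  assumes scaleC_add_right: "a *\<^sub>C (x + y) = a *\<^sub>C x + a *\<^sub>C y"
    and scaleC_add_left: "(a + b) *\<^sub>C x = a *\<^sub>C x + b *\<^sub>C x"
    and scaleC_scaleC: "a *\<^sub>C (b *\<^sub>C x) = (a * b) *\<^sub>C x"
    and scaleC_one: "1 *\<^sub>C x = x"
    and scaleR_scaleC: "scaleR r x = complex_of_real r *\<^sub>C x"

class complex_inner = complex_vector + real_normed_vector +
  fixes cinner :: "'a \<Rightarrow> 'a \<Rightarrow> complex"
  assumes cinner_commute: "cinner x y = cnj (cinner y x)"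
    and cinner_add_left: "cinner (x + y) z = cinner x z + cinner y z"
    and cinner_scaleC_left: "cinner (a *\<^sub>C x) y = cnj a * cinner x y"
    and cinner_self_real: "Im (cinner x x) = 0"
    and cinner_self_nonneg: "0 \<le> Re (cinner x x)"
    and cinner_self_eq_zero: "cinner x x = 0 \<longleftrightarrow> x = 0"
    and norm_eq_sqrt_cinner: "norm x = sqrt (Re (cinner x x))"

class chilbert_space = complex_inner + complete_space

definition clinear :: "('a::complex_vector \<Rightarrow> 'b::complex_vector) \<Rightarrow> bool" where
  "clinear f \<longleftrightarrow> (\<forall>x y. f (x + y) = f x + f y) \<and> (\<forall>a x. f (a *\<^sub>C x) = a *\<^sub>C f x)"

definition bounded_clinear :: "('a::complex_inner \<Rightarrow> 'b::complex_inner) \<Rightarrow> bool" where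
  "bounded_clinear f \<longleftrightarrow> clinear f \<and> (\<exists>K. \<forall>x. norm (f x) \<le> norm x * K)"

definition cspan :: "'a::complex_vector set \<Rightarrow> 'a set" where
  "cspan S = {\<Sum>v\<in>F. c v *\<^sub>C v | F c. finite F \<and> F \<subseteq> S}"

definition circle_measure :: "complex measure" where
  "circle_measure =
     distr (scale_measure (ennreal (1 / (2 * pi))) (restrict_space lborel {0..<2 * pi})) borel cis"

end

theory Submission
  imports Defs
begin



subclass (in chilbert_space) banach ..

lemma scaleC_zero_left[simp]: "(0::complex) *\<^sub>C (x::'a::complex_vector) = 0"
proof -
  have "(0::complex) *\<^sub>C x = (0 + 0) *\<^sub>C x" by simp
  also have "\<dots> = 0 *\<^sub>C x + 0 *\<^sub>C x" by (rule scaleC_add_left)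
  finally show ?thesis by simp
qed

lemma scaleC_zero_right[simp]: "(a::complex) *\<^sub>C (0::'a::complex_vector) = 0"
proof -
  have "a *\<^sub>C (0::'a) = a *\<^sub>C (0 + 0)" by simp
  also have "\<dots> = a *\<^sub>C 0 + a *\<^sub>C 0" by (rule scaleC_add_right)
  finally show ?thesis by simp
qed

lemma scaleC_minus_right: "(a::complex) *\<^sub>C (- x::'a::complex_vector) = - (a *\<^sub>C x)"
proof -
  have "a *\<^sub>C (- x) + a *\<^sub>C x = a *\<^sub>C (-x + x)" by (rule scaleC_add_right[symmetric])
  then have "a *\<^sub>C (- x) + a *\<^sub>C x = 0" by simp
  then show ?thesis by (simp add: eq_neg_iff_add_eq_0)
qed

lemma scaleC_diff_right: "(a::complex) *\<^sub>C (x - y::'a::complex_vector) = a *\<^sub>C x - a *\<^sub>C y"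
  by (simp only: diff_conv_add_uminus scaleC_add_right scaleC_minus_right)

lemma scaleC_minus_left: "(- a::complex) *\<^sub>C (x::'a::complex_vector) = - (a *\<^sub>C x)"
proof -
  have "(- a) *\<^sub>C x + a *\<^sub>C x = (-a + a) *\<^sub>C x" by (rule scaleC_add_left[symmetric])
  then have "(- a) *\<^sub>C x + a *\<^sub>C x = 0" by simp
  then show ?thesis by (simp add: eq_neg_iff_add_eq_0)
qed

lemma scaleC_diff_left: "(a - b::complex) *\<^sub>C (x::'a::complex_vector) = a *\<^sub>C x - b *\<^sub>C x"
  by (simp only: diff_conv_add_uminus scaleC_add_left scaleC_minus_left)

lemma scaleC_sum_right: "(a::complex) *\<^sub>C (\<Sum>i\<in>A. f i) = (\<Sum>i\<in>A. a *\<^sub>C (f i::'a::complex_vector))"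
  by (induction A rule: infinite_finite_induct) (auto simp: scaleC_add_right)

lemma scaleC_sum_left: "(\<Sum>i\<in>A. f i) *\<^sub>C (x::'a::complex_vector) = (\<Sum>i\<in>A. f i *\<^sub>C x)"
  by (induction A rule: infinite_finite_induct) (auto simp: scaleC_add_left)

lemma cinner_zero_left[simp]: "cinner 0 (y::'a::complex_inner) = 0"
proof -
  have "cinner 0 y = cinner 0 y + cinner 0 y" using cinner_add_left[of 0 0 y] by simp
  then show ?thesis by simp
qed

lemma cinner_zero_right[simp]: "cinner (x::'a::complex_inner) 0 = 0"
  using cinner_commute[of x 0] by simp

lemma cinner_add_right: "cinner (x::'a::complex_inner) (y + z) = cinner x y + cinner x z"
proof -
  have "cinner x (y+z) = cnj (cinner (y+z) x)" by (rule cinner_commute)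
  also have "\<dots> = cnj (cinner y x) + cnj (cinner z x)" by (simp add: cinner_add_left)
  also have "\<dots> = cinner x y + cinner x z" by (simp add: cinner_commute[of x y] cinner_commute[of x z])
  finally show ?thesis .
qed

lemma cinner_scaleC_right: "cinner (x::'a::complex_inner) (a *\<^sub>C y) = a * cinner x y"
proof -
  have "cinner x (a *\<^sub>C y) = cnj (cinner (a *\<^sub>C y) x)" by (rule cinner_commute)
  also have "\<dots> = a * cnj (cinner y x)" by (simp add: cinner_scaleC_left)
  also have "\<dots> = a * cinner x y" by (simp add: cinner_commute[of x y])
  finally show ?thesis .
qed

lemma cinner_minus_left: "cinner (- x::'a::complex_inner) y = - cinner x y"
proof -
  have "cinner (- x) y + cinner x y = cinner (-x + x) y" by (rule cinner_add_left[symmetric])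
  then have "cinner (- x) y + cinner x y = 0" by simp
  then show ?thesis by (simp add: eq_neg_iff_add_eq_0)
qed

lemma cinner_minus_right: "cinner (x::'a::complex_inner) (- y) = - cinner x y"
proof -
  have "cinner x (- y) + cinner x y = cinner x (-y + y)" by (rule cinner_add_right[symmetric])
  then have "cinner x (- y) + cinner x y = 0" by simp
  then show ?thesis by (simp add: eq_neg_iff_add_eq_0)
qed

lemma cinner_diff_left: "cinner (x - y::'a::complex_inner) z = cinner x z - cinner y z"
  by (simp only: diff_conv_add_uminus cinner_add_left cinner_minus_left)

lemma cinner_diff_right: "cinner (x::'a::complex_inner) (y - z) = cinner x y - cinner x z"
  by (simp only: diff_conv_add_uminus cinner_add_right cinner_minus_right)

lemma cinner_scaleR_left: "cinner (r *\<^sub>R x::'a::complex_inner) y = of_real r * cinner x y"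
proof -
  have "cinner (r *\<^sub>R x) y = cinner (complex_of_real r *\<^sub>C x) y" by (simp only: scaleR_scaleC)
  also have "\<dots> = cnj (complex_of_real r) * cinner x y" by (rule cinner_scaleC_left)
  finally show ?thesis by simp
qed

lemma cinner_scaleR_right: "cinner (x::'a::complex_inner) (r *\<^sub>R y) = of_real r * cinner x y"
proof -
  have "cinner x (r *\<^sub>R y) = cinner x (complex_of_real r *\<^sub>C y)" by (simp only: scaleR_scaleC)
  also have "\<dots> = complex_of_real r * cinner x y" by (rule cinner_scaleC_right)
  finally show ?thesis .
qed

lemma cinner_sum_left: "cinner (\<Sum>i\<in>A. f i) (y::'a::complex_inner) = (\<Sum>i\<in>A. cinner (f i) y)"
  by (induction A rule: infinite_finite_induct) (auto simp: cinner_add_left)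

lemma cinner_sum_right: "cinner (x::'a::complex_inner) (\<Sum>i\<in>A. f i) = (\<Sum>i\<in>A. cinner x (f i))"
  by (induction A rule: infinite_finite_induct) (auto simp: cinner_add_right)

lemma cinner_self_eq: "cinner (x::'a::complex_inner) x = complex_of_real ((norm x)\<^sup>2)"
proof -
  have "(norm x)\<^sup>2 = Re (cinner x x)"
    using norm_eq_sqrt_cinner[of x] cinner_self_nonneg[of x] by simp
  then show ?thesis using cinner_self_real[of x] by (simp add: complex_eq_iff)
qed

lemma norm_sq_cinner: "(norm (x::'a::complex_inner))\<^sup>2 = Re (cinner x x)"
  by (simp add: cinner_self_eq)

lemma cinner_ext: assumes "\<And>y. cinner a y = cinner (b::'a::complex_inner) y" shows "a = b"
proof -
  have "cinner (a - b) (a - b) = 0" by (simp add: cinner_diff_left assms)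
  then show ?thesis by (simp add: cinner_self_eq_zero)
qed

lemma cnj_mult_self: "cnj a * a = complex_of_real ((cmod a)\<^sup>2)"
  using complex_norm_square[of a] by (simp add: mult.commute)

lemma norm_scaleC: "norm (a *\<^sub>C (x::'a::complex_inner)) = cmod a * norm x"
proof -
  have "cinner (a *\<^sub>C x) (a *\<^sub>C x) = (cnj a * a) * cinner x x"
    by (simp add: cinner_scaleC_left cinner_scaleC_right mult.left_commute)
  also have "cnj a * a = complex_of_real ((cmod a)\<^sup>2)"
    by (rule cnj_mult_self)
  finally have eq: "cinner (a *\<^sub>C x) (a *\<^sub>C x) = complex_of_real ((cmod a)\<^sup>2) * cinner x x" .
  have "(norm (a *\<^sub>C x))\<^sup>2 = (cmod a)\<^sup>2 * (norm x)\<^sup>2"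
    unfolding norm_sq_cinner eq by simp
  also have "\<dots> = (cmod a * norm x)\<^sup>2" by (simp add: power_mult_distrib)
  finally show ?thesis
    by (rule power2_eq_imp_eq) simp_all
qed

lemma cinner_CS: "cmod (cinner (x::'a::complex_inner) y) \<le> norm x * norm y"
proof (cases "x = 0")
  case True then show ?thesis by simp
next
  case False
  define t where "t = cinner x y / cinner x x"
  define z where "z = y - t *\<^sub>C x"
  have xx: "cinner x x \<noteq> 0" using False cinner_self_eq_zero by blast
  have "cinner x z = cinner x y - t * cinner x x"
    unfolding z_def by (simp only: cinner_diff_right cinner_scaleC_right)
  then have xz: "cinner x z = 0" unfolding t_def using xx by simp
  have zx: "cinner z x = 0" using xz cinner_commute[of z x] by simp
  have y: "z + t *\<^sub>C x = y" by (simp add: z_def)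
  have "cinner (z + t *\<^sub>C x) (z + t *\<^sub>C x) = cinner z z + t * cinner z x + (cnj t * cinner x z + cnj t * (t * cinner x x))"
    by (simp add: cinner_add_left cinner_add_right cinner_scaleC_left cinner_scaleC_right algebra_simps)
  then have "cinner y y = cinner z z + (cnj t * t) * cinner x x"
    by (simp add: y xz zx mult.assoc)
  also have "cnj t * t = complex_of_real ((cmod t)\<^sup>2)"
    by (rule cnj_mult_self)
  finally have eq: "cinner y y = cinner z z + complex_of_real ((cmod t)\<^sup>2) * cinner x x" .
  have "(norm y)\<^sup>2 = (norm z)\<^sup>2 + (cmod t)\<^sup>2 * (norm x)\<^sup>2"
    unfolding norm_sq_cinner eq by simp
  then have "(cmod t * norm x)\<^sup>2 \<le> (norm y)\<^sup>2"
    by (simp add: power_mult_distrib)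
  then have 1: "cmod t * norm x \<le> norm y"
    by (rule power2_le_imp_le[OF _ norm_ge_zero])
  have "cmod (cinner x y) = cmod t * cmod (cinner x x)"
    using xx by (simp add: t_def norm_divide)
  also have "cmod (cinner x x) = (norm x)\<^sup>2" by (simp add: cinner_self_eq norm_power)
  also have "cmod t * (norm x)\<^sup>2 = (cmod t * norm x) * norm x" by (simp add: power2_eq_square)
  also have "\<dots> \<le> norm y * norm x" using 1 by (rule mult_right_mono) simp
  also have "norm y * norm x = norm x * norm y" by (rule mult.commute)
  finally show ?thesis .
qed




lemma bounded_bilinear_cinner: "bounded_bilinear (cinner :: 'a::complex_inner \<Rightarrow> 'a \<Rightarrow> complex)"
  unfolding bounded_bilinear_def
  by (auto simp: cinner_add_left cinner_add_right cinner_scaleR_left cinner_scaleR_right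
      scaleR_conv_of_real intro!: exI[of _ 1] cinner_CS)

lemma bounded_bilinear_scaleC: "bounded_bilinear (scaleC :: complex \<Rightarrow> 'a::complex_inner \<Rightarrow> 'a)"
  unfolding bounded_bilinear_def
  by (auto simp: scaleC_add_left scaleC_add_right scaleC_scaleC scaleR_scaleC norm_scaleC
      scaleR_conv_of_real mult.commute[of _ "complex_of_real _"] intro!: exI[of _ 1])

lemma pythag: assumes "Re (cinner a b) = 0"
  shows "(norm (a + b::'a::complex_inner))\<^sup>2 = (norm a)\<^sup>2 + (norm b)\<^sup>2"
proof -
  have "Re (cinner b a) = 0" using assms cinner_commute[of b a] by simp
  then show ?thesis using assms
    by (simp add: norm_sq_cinner cinner_add_left cinner_add_right)
qed

lemma clinear_scaleR: "clinear f \<Longrightarrow> f (r *\<^sub>R x) = r *\<^sub>R f x"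
  unfolding clinear_def scaleR_scaleC by blast

lemma bounded_clinear_bounded_linear: "bounded_clinear f \<Longrightarrow> bounded_linear f"
proof -
  assume a: "bounded_clinear f"
  then have l: "clinear f" and "\<exists>K. \<forall>x. norm (f x) \<le> norm x * K" unfolding bounded_clinear_def by auto
  then obtain K where K: "\<And>x. norm (f x) \<le> norm x * K" by blast
  show ?thesis
  proof (rule bounded_linear_intro)
    show "f (x + y) = f x + f y" for x y using l unfolding clinear_def by blast
    show "f (r *\<^sub>R x) = r *\<^sub>R f x" for r x using l by (rule clinear_scaleR)
    show "norm (f x) \<le> norm x * K" for x by (rule K)
  qed
qed

lemma bounded_clinear_compose:
  assumes "bounded_clinear f" "bounded_clinear g" shows "bounded_clinear (f \<circ> g)"
proof -
  obtain K1 where K1: "\<forall>x. norm (f x) \<le> norm x * K1" using assms(1) unfolding bounded_clinear_def by blast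
  obtain K2 where K2: "\<forall>x. norm (g x) \<le> norm x * K2" using assms(2) unfolding bounded_clinear_def by blast
  have "norm (f (g x)) \<le> norm x * (K2 * max K1 0)" for x
  proof -
    have "norm (f (g x)) \<le> norm (g x) * max K1 0" using K1
      by (meson max.cobounded1 mult_left_mono norm_ge_zero order_trans)
    also have "\<dots> \<le> (norm x * K2) * max K1 0" using K2 by (simp add: mult_right_mono)
    finally show ?thesis by (simp add: mult.assoc)
  qed
  then show ?thesis using assms unfolding bounded_clinear_def clinear_def by auto
qed

lemma bounded_clinear_funpow: "bounded_clinear (f::'a::complex_inner \<Rightarrow> 'a) \<Longrightarrow> bounded_clinear (f ^^ n)"
proof (induction n)
  case 0
  have "bounded_clinear (id::'a \<Rightarrow> 'a)"
    by (auto simp: bounded_clinear_def clinear_def intro!: exI[of _ 1])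
  moreover have "f ^^ 0 = id" by (rule ext) simp
  ultimately show ?case by (simp add: id_def)
next
  case (Suc n)
  have "bounded_clinear (f \<circ> (f ^^ n))"
    by (rule bounded_clinear_compose[OF Suc.prems Suc.IH[OF Suc.prems]])
  moreover have "f ^^ Suc n = f \<circ> (f ^^ n)" by (rule funpow.simps(2))
  ultimately show ?case by (simp only:)
qed




lemma bounded_linear_cinner_left: "bounded_linear (\<lambda>v::'a::complex_inner. cinner v y)"
  by (rule bounded_bilinear.bounded_linear_left[OF bounded_bilinear_cinner])

lemma bounded_linear_cinner_right: "bounded_linear (\<lambda>v::'a::complex_inner. cinner y v)"
  by (rule bounded_bilinear.bounded_linear_right[OF bounded_bilinear_cinner])

lemma proj_cinner:
  fixes e :: "nat \<Rightarrow> 'a::complex_inner"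
  assumes ortho: "\<forall>j k. cinner (e j) (e k) = (if j = k then 1 else 0)"
  shows "cinner (e i) (\<Sum>j<m. cinner (e j) v *\<^sub>C e j) = (if i < m then cinner (e i) v else 0)"
proof -
  have "cinner (e i) (\<Sum>j<m. cinner (e j) v *\<^sub>C e j) = (\<Sum>j<m. cinner (e j) v * cinner (e i) (e j))"
    by (simp add: cinner_sum_right cinner_scaleC_right)
  also have "\<dots> = (\<Sum>j<m. (if i = j then cinner (e j) v else 0))"
    by (rule sum.cong) (simp_all add: ortho)
  also have "\<dots> = (if i < m then cinner (e i) v else 0)"
    by (simp add: sum.delta)
  finally show ?thesis .
qed

lemma proj_norm:
  fixes e :: "nat \<Rightarrow> 'a::complex_inner" and v :: 'a and m :: nat
  assumes ortho: "\<forall>j k. cinner (e j) (e k) = (if j = k then 1 else 0)"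
  defines "p \<equiv> (\<Sum>j<m. cinner (e j) v *\<^sub>C e j)"
  shows "(norm (v - p))\<^sup>2 = (norm v)\<^sup>2 - (\<Sum>j<m. (cmod (cinner (e j) v))\<^sup>2)"
    and "\<And>i. i < m \<Longrightarrow> cinner (e i) (v - p) = 0"
    and "cinner p (v - p) = 0"
proof -
  define S where "S = (\<Sum>j<m. (cmod (cinner (e j) v))\<^sup>2)"
  have ep: "cinner (e i) p = (if i < m then cinner (e i) v else 0)" for i
    unfolding p_def by (rule proj_cinner[OF ortho])
  have pv: "cinner p v = complex_of_real S"
  proof -
    have "cinner p v = (\<Sum>j<m. cnj (cinner (e j) v) * cinner (e j) v)"
      by (simp add: p_def cinner_sum_left cinner_scaleC_left)
    also have "\<dots> = (\<Sum>j<m. complex_of_real ((cmod (cinner (e j) v))\<^sup>2))"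
      by (simp add: cnj_mult_self)
    finally show ?thesis by (simp add: S_def)
  qed
  have pp: "cinner p p = complex_of_real S"
  proof -
    have "cinner p p = (\<Sum>j<m. cnj (cinner (e j) v) * cinner (e j) p)"
      by (simp add: p_def cinner_sum_left cinner_scaleC_left)
    also have "\<dots> = (\<Sum>j<m. cnj (cinner (e j) v) * cinner (e j) v)"
      by (rule sum.cong) (simp_all add: ep)
    also have "\<dots> = (\<Sum>j<m. complex_of_real ((cmod (cinner (e j) v))\<^sup>2))"
      by (simp add: cnj_mult_self)
    finally show ?thesis by (simp add: S_def)
  qed
  have vp: "cinner v p = complex_of_real S"
    using pv cinner_commute[of v p] by simp
  have "cinner (v - p) (v - p) = cinner v v - cinner p v - (cinner v p - cinner p p)"
    by (simp only: cinner_diff_left cinner_diff_right)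
  also have "\<dots> = cinner v v - complex_of_real S" by (simp add: pv pp vp)
  finally show "(norm (v - p))\<^sup>2 = (norm v)\<^sup>2 - S"
    by (simp add: norm_sq_cinner)
  show evp: "cinner (e i) (v - p) = 0" if "i < m" for i
    using that by (simp add: cinner_diff_right ep)
  have "cinner p (v - p) = (\<Sum>j<m. cnj (cinner (e j) v) * cinner (e j) (v - p))"
    by (simp add: p_def cinner_sum_left cinner_scaleC_left)
  also have "\<dots> = 0" by (rule sum.neutral) (simp add: evp)
  finally show "cinner p (v - p) = 0" .
qed

lemma bessel:
  fixes e :: "nat \<Rightarrow> 'a::complex_inner"
  assumes ortho: "\<forall>j k. cinner (e j) (e k) = (if j = k then 1 else 0)"
  shows "(\<Sum>j<m. (cmod (cinner (e j) v))\<^sup>2) \<le> (norm v)\<^sup>2"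
  using proj_norm(1)[OF ortho, where v=v and m=m] by (metis diff_ge_0_iff_ge zero_le_power2)

lemma parseval:
  fixes e :: "nat \<Rightarrow> 'a::complex_inner"
  assumes ortho: "\<forall>j k. cinner (e j) (e k) = (if j = k then 1 else 0)"
    and basis: "closure (cspan (range e)) = UNIV"
  shows "(\<lambda>m. \<Sum>j<m. (cmod (cinner (e j) v))\<^sup>2) \<longlonglongrightarrow> (norm v)\<^sup>2"
proof (rule LIMSEQ_I)
  fix r :: real assume r: "0 < r"
  have "v \<in> closure (cspan (range e))" using basis by simp
  then obtain u where u: "u \<in> cspan (range e)" and du: "dist u v < sqrt r"
    using r by (meson closure_approachable real_sqrt_gt_0_iff)
  obtain F c where F: "finite F" "F \<subseteq> range e" and uF: "u = (\<Sum>w\<in>F. c w *\<^sub>C w)"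
    using u unfolding cspan_def by blast
  obtain C where C: "C \<subseteq> UNIV" "finite C" "F = e ` C"
    using finite_subset_image[OF F(1) F(2)] by blast
  obtain M where M: "C \<subseteq> {..<M}" using finite_nat_bounded[OF C(2)] by blast
  show "\<exists>no. \<forall>m\<ge>no. norm ((\<Sum>j<m. (cmod (cinner (e j) v))\<^sup>2) - (norm v)\<^sup>2) < r"
  proof (intro exI allI impI)
    fix m assume m: "M \<le> m"
    define p where "p = (\<Sum>j<m. cinner (e j) v *\<^sub>C e j)"
    note pn = proj_norm[OF ortho, where v=v and m=m, folded p_def]
    have wF: "cinner w (v - p) = 0" if wmem: "w \<in> F" for w
    proof -
      obtain i where "i \<in> C" "w = e i" using wmem C(3) by blast
      then have "i < m" using M m by auto
      then show ?thesis using pn(2) \<open>w = e i\<close> by simp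
    qed
    have "cinner u (v - p) = (\<Sum>w\<in>F. cnj (c w) * cinner w (v - p))"
      by (simp add: uF cinner_sum_left cinner_scaleC_left)
    also have "\<dots> = 0" by (rule sum.neutral) (simp add: wF)
    finally have up: "cinner u (v - p) = 0" .
    have "cinner (p - u) (v - p) = 0"
      by (simp add: cinner_diff_left up pn(3))
    then have "cinner (v - p) (p - u) = 0"
      using cinner_commute[of "v - p" "p - u"] by simp
    then have "(norm ((v - p) + (p - u)))\<^sup>2 = (norm (v - p))\<^sup>2 + (norm (p - u))\<^sup>2"
      by (intro pythag) simp
    moreover have "(v - p) + (p - u) = v - u" by simp
    ultimately have "(norm (v - p))\<^sup>2 \<le> (norm (v - u))\<^sup>2" by simp
    also have "(norm (v - u))\<^sup>2 < r"
    proof -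
      have "norm (v - u) < sqrt r" using du by (simp add: dist_norm norm_minus_commute)
      then have "(norm (v - u))\<^sup>2 < (sqrt r)\<^sup>2"
        by (intro power_strict_mono) simp_all
      then show ?thesis using r by simp
    qed
    finally have "(norm v)\<^sup>2 - (\<Sum>j<m. (cmod (cinner (e j) v))\<^sup>2) < r" using pn(1) by simp
    moreover have "(\<Sum>j<m. (cmod (cinner (e j) v))\<^sup>2) \<le> (norm v)\<^sup>2" by (rule bessel[OF ortho])
    ultimately show "norm ((\<Sum>j<m. (cmod (cinner (e j) v))\<^sup>2) - (norm v)\<^sup>2) < r" by simp
  qed
qed




lemma scale_measure_density:
  "scale_measure (ennreal c) M = density M (\<lambda>_. ennreal c)"
proof (rule measure_eqI)
  show "sets (scale_measure (ennreal c) M) = sets (density M (\<lambda>_. ennreal c))" by simp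
  fix A assume "A \<in> sets (scale_measure (ennreal c) M)"
  then have "A \<in> sets M" by simp
  then show "emeasure (scale_measure (ennreal c) M) A = emeasure (density M (\<lambda>_. ennreal c)) A"
    by (simp add: emeasure_density_const)
qed

definition circ0 :: "real measure" where
  "circ0 = restrict_space lborel {0..<2 * pi}"

lemma circle_measure_eq:
  "circle_measure = distr (density circ0 (\<lambda>_. ennreal (1 / (2 * pi)))) borel cis"
  unfolding circle_measure_def circ0_def scale_measure_density ..

lemma cis_meas: "cis \<in> measurable (density circ0 (\<lambda>_. ennreal (1 / (2 * pi)))) borel"
proof -
  have "cis \<in> measurable lborel borel"
    using borel_measurable_continuous_onI[OF continuous_on_cis[OF continuous_on_id]] by simp
  then have "cis \<in> measurable circ0 borel"
    unfolding circ0_def by (rule measurable_restrict_space1)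
  moreover have "measurable (density circ0 (\<lambda>_. ennreal (1 / (2 * pi)))) borel = measurable circ0 borel"
    by (rule measurable_cong_sets) simp_all
  ultimately show ?thesis by simp
qed

lemma circ0_integral:
  fixes g :: "real \<Rightarrow> 'b::euclidean_space"
  assumes cont: "continuous_on {0..2*pi} g"
  shows "integrable circ0 g" "integral\<^sup>L circ0 g = integral {0..2*pi} g"
proof -
  have sets: "{0..<2*pi} \<inter> space lborel \<in> sets lborel" by simp
  have si: "set_integrable lborel {0..2*pi} g"
    unfolding set_integrable_def by (rule borel_integrable_compact) (simp_all add: cont)
  then have si2: "set_integrable lborel {0..<2*pi} g"
    by (rule set_integrable_subset) auto
  then show "integrable circ0 g"
    unfolding circ0_def integrable_restrict_space[OF sets] set_integrable_def .
  have "integral\<^sup>L circ0 g = (LINT t:{0..<2*pi}|lborel. g t)"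
    unfolding circ0_def integral_restrict_space[OF sets] set_lebesgue_integral_def ..
  also have "\<dots> = integral {0..<2*pi} g"
    by (rule set_borel_integral_eq_integral(2)[OF si2])
  also have "\<dots> = integral {0..2*pi} g"
  proof (rule integral_subset_negligible)
    show "{0..<2*pi} \<subseteq> {0..2*pi}" by auto
    have "{0..2*pi} - {0..<2*pi} = {2*pi::real}" using pi_gt_zero by auto
    then show "negligible ({0..2*pi} - {0..<2*pi::real})" by simp
  qed
  finally show "integral\<^sup>L circ0 g = integral {0..2*pi} g" .
qed

lemma circle_integral:
  fixes f :: "complex \<Rightarrow> 'b::euclidean_space"
  assumes meas: "f \<in> borel_measurable borel"
    and cont: "continuous_on {0..2*pi} (\<lambda>t. f (cis t))"
  shows "integrable circle_measure f"
    "integral\<^sup>L circle_measure f = (1 / (2 * pi)) *\<^sub>R integral {0..2*pi} (\<lambda>t. f (cis t))"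
proof -
  let ?D = "density circ0 (\<lambda>_. ennreal (1 / (2 * pi)))"
  have fm: "(\<lambda>t. f (cis t)) \<in> borel_measurable circ0"
    using measurable_comp[OF cis_meas meas]
    by (simp add: comp_def measurable_cong_sets[of ?D circ0 borel borel])
  have ci: "integrable circ0 (\<lambda>t. f (cis t))" and cI: "integral\<^sup>L circ0 (\<lambda>t. f (cis t)) = integral {0..2*pi} (\<lambda>t. f (cis t))"
    using circ0_integral[OF cont] by auto
  have "integrable ?D (\<lambda>t. f (cis t)) \<longleftrightarrow> integrable circ0 (\<lambda>t. (1 / (2 * pi)) *\<^sub>R f (cis t))"
    by (rule integrable_density) (simp_all add: fm)
  then have "integrable ?D (\<lambda>t. f (cis t))" using ci by simp
  then show "integrable circle_measure f"
    unfolding circle_measure_eq using integrable_distr_eq[OF cis_meas meas] by simp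
  have "integral\<^sup>L circle_measure f = integral\<^sup>L ?D (\<lambda>t. f (cis t))"
    unfolding circle_measure_eq by (rule integral_distr[OF cis_meas meas])
  also have "\<dots> = integral\<^sup>L circ0 (\<lambda>t. (1 / (2 * pi)) *\<^sub>R f (cis t))"
    by (rule integral_density) (simp_all add: fm)
  also have "\<dots> = (1 / (2 * pi)) *\<^sub>R integral {0..2*pi} (\<lambda>t. f (cis t))"
    by (simp add: cI)
  finally show "integral\<^sup>L circle_measure f = (1 / (2 * pi)) *\<^sub>R integral {0..2*pi} (\<lambda>t. f (cis t))" .
qed

lemma not_meas_integral:
  fixes f :: "complex \<Rightarrow> 'b::{banach, second_countable_topology}"
  assumes "f \<notin> borel_measurable borel"
  shows "integral\<^sup>L circle_measure f = 0"
proof -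
  have "f \<notin> borel_measurable circle_measure"
    using assms measurable_cong_sets[of circle_measure borel borel borel]
    by (simp add: circle_measure_def)
  then have "\<not> integrable circle_measure f" using borel_measurable_integrable by blast
  then show ?thesis by (rule not_integrable_integral_eq)
qed

lemma circle_measure_sets: "sets circle_measure = sets borel"
  by (simp add: circle_measure_def)




lemma continuous_on_scaleC[continuous_intros]:
  fixes H :: "_ \<Rightarrow> 'a::complex_inner"
  shows "continuous_on S g \<Longrightarrow> continuous_on S H \<Longrightarrow> continuous_on S (\<lambda>t. g t *\<^sub>C H t)"
  by (rule bounded_bilinear.continuous_on[OF bounded_bilinear_scaleC])

lemma continuous_on_cinner[continuous_intros]:
  fixes H G :: "_ \<Rightarrow> 'a::complex_inner"
  shows "continuous_on S G \<Longrightarrow> continuous_on S H \<Longrightarrow> continuous_on S (\<lambda>t. cinner (G t) (H t))"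
  by (rule bounded_bilinear.continuous_on[OF bounded_bilinear_cinner])

lemma periodic_shift:
  fixes \<phi> :: "real \<Rightarrow> 'b::banach"
  assumes cont: "continuous_on UNIV \<phi>" and per: "\<And>t. \<phi> (t + 2*pi) = \<phi> t"
    and h: "0 \<le> h" "h \<le> 2*pi"
  shows "integral {0..2*pi} (\<lambda>t. \<phi> (t + h)) = integral {0..2*pi} \<phi>"
proof -
  have int: "\<phi> integrable_on {a..b}" for a b
    by (rule integrable_continuous_interval) (rule continuous_on_subset[OF cont], simp)
  have "integral {0..2*pi} (\<lambda>t. \<phi> (t + h)) = integral {h..2*pi+h} \<phi>"
    using integral_shift_real_ivl[of h h "2*pi+h" \<phi>] by simp
  also have "\<dots> = integral {h..2*pi} \<phi> + integral {2*pi..2*pi+h} \<phi>"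
    by (rule Henstock_Kurzweil_Integration.integral_combine[symmetric]) (use h in \<open>simp_all add: int\<close>)
  also have "integral {2*pi..2*pi+h} \<phi> = integral {0..h} (\<lambda>x. \<phi> (x + 2*pi))"
    using integral_shift_real_ivl[of "2*pi" "2*pi" "2*pi+h" \<phi>] by simp
  also have "\<dots> = integral {0..h} \<phi>" by (simp add: per)
  also have "integral {h..2*pi} \<phi> + integral {0..h} \<phi> = integral {0..2*pi} \<phi>"
    using Henstock_Kurzweil_Integration.integral_combine[of 0 h "2*pi" \<phi>] h int by (simp add: add.commute)
  finally show ?thesis .
qed

lemma integral_CS:
  fixes f g :: "real \<Rightarrow> real"
  assumes cf: "continuous_on {a..b} f" and cg: "continuous_on {a..b} g"
  shows "(integral {a..b} (\<lambda>t. f t * g t))\<^sup>2 \<le> integral {a..b} (\<lambda>t. (f t)\<^sup>2) * integral {a..b} (\<lambda>t. (g t)\<^sup>2)"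
proof -
  define A where "A = integral {a..b} (\<lambda>t. (f t)\<^sup>2)"
  define B where "B = integral {a..b} (\<lambda>t. f t * g t)"
  define C where "C = integral {a..b} (\<lambda>t. (g t)\<^sup>2)"
  have iff: "(\<lambda>t. (f t)\<^sup>2) integrable_on {a..b}" 
    by (intro integrable_continuous_interval continuous_intros cf)
  have ifg: "(\<lambda>t. f t * g t) integrable_on {a..b}" 
    by (intro integrable_continuous_interval continuous_intros cf cg)
  have igg: "(\<lambda>t. (g t)\<^sup>2) integrable_on {a..b}" 
    by (intro integrable_continuous_interval continuous_intros cg)
  have A0: "0 \<le> A" unfolding A_def by (rule integral_nonneg[OF iff]) simp
  have q: "0 \<le> x\<^sup>2 * A - 2 * x * B + C" for x
  proof -
    have i1: "(\<lambda>t. x\<^sup>2 * (f t)\<^sup>2) integrable_on {a..b}"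
      by (intro integrable_continuous_interval continuous_intros cf cg)
    have i2: "(\<lambda>t. 2 * x * (f t * g t)) integrable_on {a..b}"
      by (intro integrable_continuous_interval continuous_intros cf cg)
    have "0 \<le> integral {a..b} (\<lambda>t. (x * f t - g t)\<^sup>2)"
      by (rule integral_nonneg) (intro integrable_continuous_interval continuous_intros cf cg, simp)
    also have "integral {a..b} (\<lambda>t. (x * f t - g t)\<^sup>2)
        = integral {a..b} (\<lambda>t. x\<^sup>2 * (f t)\<^sup>2 - 2 * x * (f t * g t) + (g t)\<^sup>2)"
      by (rule integral_cong) (simp add: power2_eq_square algebra_simps)
    also have "\<dots> = integral {a..b} (\<lambda>t. x\<^sup>2 * (f t)\<^sup>2 - 2 * x * (f t * g t)) + C"
      unfolding C_def by (rule integral_add) (intro integrable_diff i1 i2, rule igg)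
    also have "integral {a..b} (\<lambda>t. x\<^sup>2 * (f t)\<^sup>2 - 2 * x * (f t * g t))
        = integral {a..b} (\<lambda>t. x\<^sup>2 * (f t)\<^sup>2) - integral {a..b} (\<lambda>t. 2 * x * (f t * g t))"
      by (rule integral_diff[OF i1 i2])
    also have "\<dots> = x\<^sup>2 * A - 2 * x * B" by (simp add: A_def B_def)
    finally show ?thesis .
  qed
  show ?thesis
  proof (cases "A = 0")
    case True
    have "B = 0"
    proof (rule ccontr)
      assume "B \<noteq> 0"
      have "0 \<le> ((C + 1) / (2 * B))\<^sup>2 * A - 2 * ((C + 1) / (2 * B)) * B + C" by (rule q)
      also have "\<dots> = -1" using True \<open>B \<noteq> 0\<close> by (simp add: field_simps)
      finally show False by simp
    qed
    then show ?thesis using True by (simp add: A_def B_def C_def)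
  next
    case False
    then have "A > 0" using A0 by simp
    have "0 \<le> (B / A)\<^sup>2 * A - 2 * (B / A) * B + C" by (rule q)
    also have "\<dots> = C - B\<^sup>2 / A" using \<open>A > 0\<close> by (simp add: field_simps power2_eq_square)
    finally have "B\<^sup>2 / A \<le> C" by simp
    then have "B\<^sup>2 \<le> C * A" using \<open>A > 0\<close> by (simp add: field_simps)
    then show ?thesis by (simp add: A_def B_def C_def mult.commute)
  qed
qed

lemma norm_integral_scaleC:
  fixes g :: "real \<Rightarrow> complex" and H :: "real \<Rightarrow> 'a::chilbert_space"
  assumes cg: "continuous_on {a..b} g" and cH: "continuous_on {a..b} H"
  shows "(norm (integral {a..b} (\<lambda>t. g t *\<^sub>C H t)))\<^sup>2
      \<le> integral {a..b} (\<lambda>t. (cmod (g t))\<^sup>2) * integral {a..b} (\<lambda>t. (norm (H t))\<^sup>2)"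
proof -
  define w where "w = integral {a..b} (\<lambda>t. g t *\<^sub>C H t)"
  define A where "A = integral {a..b} (\<lambda>t. (cmod (g t))\<^sup>2)"
  define C where "C = integral {a..b} (\<lambda>t. (norm (H t))\<^sup>2)"
  have iw: "(\<lambda>t. g t *\<^sub>C H t) integrable_on {a..b}"
    by (intro integrable_continuous_interval continuous_intros cg cH)
  have A0: "0 \<le> A" unfolding A_def
    by (rule integral_nonneg) (intro integrable_continuous_interval continuous_intros cg, simp)
  have C0: "0 \<le> C" unfolding C_def
    by (rule integral_nonneg) (intro integrable_continuous_interval continuous_intros cH, simp)
  have "cinner w w = integral {a..b} ((\<lambda>v. cinner w v) \<circ> (\<lambda>t. g t *\<^sub>C H t))"
    unfolding w_def by (rule integral_linear[OF iw bounded_linear_cinner_right, symmetric])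
  also have "\<dots> = integral {a..b} (\<lambda>t. g t * cinner w (H t))"
    by (simp add: comp_def cinner_scaleC_right)
  finally have ww: "cinner w w = integral {a..b} (\<lambda>t. g t * cinner w (H t))" .
  have "(norm w)\<^sup>2 = Re (cinner w w)" by (rule norm_sq_cinner)
  also have "\<dots> \<le> cmod (cinner w w)" by (rule complex_Re_le_cmod)
  also have "\<dots> \<le> integral {a..b} (\<lambda>t. norm w * (cmod (g t) * norm (H t)))"
    unfolding ww
  proof (rule integral_norm_bound_integral)
    show "(\<lambda>t. g t * cinner w (H t)) integrable_on {a..b}"
      by (intro integrable_continuous_interval continuous_intros cg cH)
    show "(\<lambda>t. norm w * (cmod (g t) * norm (H t))) integrable_on {a..b}"
      by (intro integrable_continuous_interval continuous_intros cg cH)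
    fix t
    have "cmod (g t * cinner w (H t)) = cmod (g t) * cmod (cinner w (H t))" by (rule norm_mult)
    also have "\<dots> \<le> cmod (g t) * (norm w * norm (H t))" by (intro mult_left_mono cinner_CS) simp
    finally show "norm (g t * cinner w (H t)) \<le> norm w * (cmod (g t) * norm (H t))"
      by (simp add: algebra_simps)
  qed
  also have "\<dots> = norm w * integral {a..b} (\<lambda>t. cmod (g t) * norm (H t))" by simp
  also have "\<dots> \<le> norm w * sqrt (A * C)"
  proof (rule mult_left_mono)
    have "(integral {a..b} (\<lambda>t. cmod (g t) * norm (H t)))\<^sup>2 \<le> A * C"
      unfolding A_def C_def by (rule integral_CS) (intro continuous_intros cg cH)+
    then show "integral {a..b} (\<lambda>t. cmod (g t) * norm (H t)) \<le> sqrt (A * C)"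
      using real_le_rsqrt by blast
  qed simp
  finally have 1: "(norm w)\<^sup>2 \<le> norm w * sqrt (A * C)" .
  have "norm w \<le> sqrt (A * C)"
  proof (cases "norm w = 0")
    case True then show ?thesis using A0 C0 by simp
  next
    case False
    then have "norm w > 0" by simp
    then show ?thesis using 1 by (simp add: power2_eq_square)
  qed
  then have "(norm w)\<^sup>2 \<le> (sqrt (A * C))\<^sup>2" by (intro power_mono) simp_all
  also have "\<dots> = A * C" using A0 C0 by simp
  finally show ?thesis by (simp add: w_def A_def C_def)
qed




locale cor_setup =
  fixes T :: "'a::chilbert_space \<Rightarrow> 'a"
    and E :: "complex \<Rightarrow> 'a"
    and R :: "'a \<Rightarrow> 'a"
    and e :: "nat \<Rightarrow> 'a"
    and \<sigma> :: "nat \<Rightarrow> real"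
    and CE \<alpha> :: real
    and n :: nat
  assumes T_bounded: "bounded_clinear T"
    and E_eigen: "\<forall>l\<in>sphere 0 1. T (E l) = l *\<^sub>C E l"
    and \<alpha>_pos: "0 < \<alpha>"
    and E_hoelder: "\<forall>\<theta> \<theta>'. norm (E (cis \<theta>) - E (cis \<theta>')) \<le> CE * \<bar>\<theta> - \<theta>'\<bar> powr \<alpha>"
    and R_def: "\<forall>x y. cinner (R x) y =
                  integral\<^sup>L circle_measure (\<lambda>l. cinner x (E l) * cnj (cinner y (E l)))"
    and e_orthonormal: "\<forall>j k. cinner (e j) (e k) = (if j = k then 1 else 0)"
    and e_basis: "closure (cspan (range e)) = UNIV"
    and e_eigen: "\<forall>k. R (e k) = complex_of_real (2 * (\<sigma> k)\<^sup>2) *\<^sub>C e k"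
    and n_pos: "0 < n"
begin

definition F :: "real \<Rightarrow> 'a" where "F t = E (cis t)"

definition \<Phi> :: "'a \<Rightarrow> 'a \<Rightarrow> complex \<Rightarrow> complex" where
  "\<Phi> x y l = cinner x (E l) * cnj (cinner y (E l))"

definition G :: "'a set" where "G = {x. \<forall>y. \<Phi> x y \<in> borel_measurable borel}"

lemma CE_nonneg: "0 \<le> CE"
proof -
  have "norm (E (cis 0) - E (cis 1)) \<le> CE * \<bar>0 - 1\<bar> powr \<alpha>" using E_hoelder by blast
  then show ?thesis by simp (meson norm_ge_zero order_trans)
qed

lemma F_hoelder: "norm (F s - F t) \<le> CE * \<bar>s - t\<bar> powr \<alpha>"
  unfolding F_def using E_hoelder by blast

lemma F_cont: "continuous_on UNIV F"
proof (rule continuous_at_imp_continuous_on, intro ballI)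
  fix s :: real
  have "((\<lambda>t. F t - F s) \<longlongrightarrow> 0) (at s)"
  proof (rule Lim_null_comparison)
    show "\<forall>\<^sub>F t in at s. norm (F t - F s) \<le> CE * \<bar>t - s\<bar> powr \<alpha>"
      by (intro always_eventually allI F_hoelder)
    have "((\<lambda>t. \<bar>t - s\<bar> powr \<alpha>) \<longlongrightarrow> 0) (at s)"
    proof (rule tendsto_zero_powrI)
      show "((\<lambda>t. \<bar>t - s\<bar>) \<longlongrightarrow> 0) (at s)"
        by (rule tendsto_eq_intros refl | simp)+
    qed (use \<alpha>_pos in auto)
    then show "((\<lambda>t. CE * \<bar>t - s\<bar> powr \<alpha>) \<longlongrightarrow> 0) (at s)"
      using tendsto_mult_right_zero by blast
  qed
  then have "(F \<longlongrightarrow> F s) (at s)" by (rule LIM_zero_cancel)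
  then show "isCont F s" by (simp add: isCont_def)
qed

lemma F_cont_on: "continuous_on S F"
  using F_cont continuous_on_subset by blast

lemma F_per: "F (t + 2 * pi) = F t"
proof -
  have "cis (t + 2 * pi) = cis t" by (simp add: cis_mult[symmetric])
  then show ?thesis by (simp add: F_def)
qed

lemma cis_sphere: "cis t \<in> sphere 0 1"
  by simp

lemma T_pow_E: "l \<in> sphere 0 1 \<Longrightarrow> (T ^^ m) (E l) = (l ^ m) *\<^sub>C E l"
proof (induction m)
  case 0 then show ?case by (simp add: scaleC_one)
next
  case (Suc m)
  have lin: "clinear T" using T_bounded unfolding bounded_clinear_def by blast
  have "(T ^^ Suc m) (E l) = T ((l ^ m) *\<^sub>C E l)" using Suc by simp
  also have "\<dots> = (l ^ m) *\<^sub>C T (E l)" using lin unfolding clinear_def by blast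
  also have "\<dots> = (l ^ m) *\<^sub>C (l *\<^sub>C E l)" using E_eigen Suc.prems by simp
  also have "\<dots> = (l ^ Suc m) *\<^sub>C E l" by (simp add: scaleC_scaleC mult.commute)
  finally show ?case .
qed

lemma T_pow_F: "(T ^^ n) (F t) = cis (real n * t) *\<^sub>C F t"
  unfolding F_def using T_pow_E[OF cis_sphere, of n t] by (simp add: Complex.DeMoivre)

lemma Phi_cont: "continuous_on S (\<lambda>t. \<Phi> x y (cis t))"
  unfolding \<Phi>_def F_def[symmetric] by (intro continuous_intros F_cont_on)

lemma Phi_add_left: "\<Phi> (x + z) y l = \<Phi> x y l + \<Phi> z y l"
  by (simp add: \<Phi>_def cinner_add_left algebra_simps)

lemma Phi_diff_left: "\<Phi> (x - z) y l = \<Phi> x y l - \<Phi> z y l"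
  by (simp add: \<Phi>_def cinner_diff_left algebra_simps)

lemma Phi_add_right: "\<Phi> x (y + z) l = \<Phi> x y l + \<Phi> x z l"
  by (simp add: \<Phi>_def cinner_add_left algebra_simps)

lemma Phi_swap: "\<Phi> x y l = cnj (\<Phi> y x l)"
  by (simp add: \<Phi>_def)

lemma cnj_meas: "f \<in> borel_measurable M \<Longrightarrow> (\<lambda>x. cnj (f x :: complex)) \<in> borel_measurable M"
  using measurable_compose[of f M borel cnj borel]
    borel_measurable_continuous_onI[OF continuous_on_cnj[OF continuous_on_id]]
  by (simp add: comp_def)

lemma R_circle: "cinner (R x) y = integral\<^sup>L circle_measure (\<Phi> x y)"
  using R_def unfolding \<Phi>_def[abs_def] by blast

lemma R_meas: "\<Phi> x y \<in> borel_measurable borel \<Longrightarrow>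
   cinner (R x) y = (1 / (2 * pi)) *\<^sub>R integral {0..2*pi} (\<lambda>t. \<Phi> x y (cis t))"
  unfolding R_circle by (rule circle_integral(2)) (simp_all add: Phi_cont)

lemma R_notG: assumes "x \<notin> G" shows "R x = 0"
proof -
  obtain z where z: "\<Phi> x z \<notin> borel_measurable borel" using assms unfolding G_def by blast
  have "cinner (R x) y = 0" for y
  proof (cases "\<Phi> x y \<in> borel_measurable borel")
    case False
    then show ?thesis unfolding R_circle by (rule not_meas_integral)
  next
    case True
    have "\<Phi> x (y + z) \<notin> borel_measurable borel"
    proof
      assume "\<Phi> x (y + z) \<in> borel_measurable borel"
      then have "(\<lambda>l. \<Phi> x (y + z) l - \<Phi> x y l) \<in> borel_measurable borel"
        using True by measurable
      moreover have "(\<lambda>l. \<Phi> x (y + z) l - \<Phi> x y l) = \<Phi> x z"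
        by (rule ext) (simp add: Phi_add_right)
      ultimately show False using z by simp
    qed
    then have "cinner (R x) (y + z) = 0" unfolding R_circle by (rule not_meas_integral)
    moreover have "cinner (R x) z = 0" unfolding R_circle using z by (rule not_meas_integral)
    ultimately show ?thesis by (simp add: cinner_add_right)
  qed
  then have "cinner (R x) (R x) = 0" by blast
  then show ?thesis by (simp add: cinner_self_eq_zero)
qed

lemma G_diff: "x \<in> G \<Longrightarrow> z \<in> G \<Longrightarrow> x - z \<in> G"
proof -
  assume x: "x \<in> G" and z: "z \<in> G"
  have "\<Phi> (x - z) y \<in> borel_measurable borel" for y
  proof -
    have mx: "\<Phi> x y \<in> borel_measurable borel" using x unfolding G_def by blast
    have mz: "\<Phi> z y \<in> borel_measurable borel" using z unfolding G_def by blast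
    have "(\<lambda>l. \<Phi> x y l - \<Phi> z y l) \<in> borel_measurable borel"
      using mx mz by measurable
    moreover have "(\<lambda>l. \<Phi> x y l - \<Phi> z y l) = \<Phi> (x - z) y"
      by (rule ext) (simp add: Phi_diff_left)
    ultimately show ?thesis by simp
  qed
  then show ?thesis unfolding G_def by blast
qed

lemma e_nonzero: "e k \<noteq> 0"
proof
  assume "e k = 0"
  then have "cinner (e k) (e k) = 0" by simp
  then show False using e_orthonormal by simp
qed

lemma Re_e_k: "cinner (R (e k)) (e k) = complex_of_real (2 * (\<sigma> k)\<^sup>2)"
  using e_eigen e_orthonormal by (simp add: cinner_scaleC_left)

lemma caseB: assumes j: "e j \<notin> G" shows "\<sigma> k = 0"
proof -
  have "cinner (R (e k)) (e k) = 0"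
  proof (cases "e k \<in> G")
    case False
    then show ?thesis using R_notG by simp
  next
    case True
    define x where "x = e j"
    define g where "g = e k"
    have xG: "x \<notin> G" using j x_def by simp
    have gG: "g \<in> G" using True g_def by simp
    have xgG: "x + g \<notin> G"
    proof
      assume "x + g \<in> G"
      then have "(x + g) - g \<in> G" using gG G_diff by blast
      then show False using xG by simp
    qed
    have mxg: "\<Phi> x g \<in> borel_measurable borel"
    proof -
      have "(\<lambda>l. cnj (\<Phi> g x l)) \<in> borel_measurable borel"
        using gG unfolding G_def by (intro cnj_meas) blast
      moreover have "(\<lambda>l. cnj (\<Phi> g x l)) = \<Phi> x g" by (rule ext) (simp add: \<Phi>_def)
      ultimately show ?thesis by simp
    qed
    have mgg: "\<Phi> g g \<in> borel_measurable borel" using gG unfolding G_def by blast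
    have "0 = cinner (R (x + g)) g" using R_notG[OF xgG] by simp
    also have "\<dots> = integral\<^sup>L circle_measure (\<lambda>l. \<Phi> x g l + \<Phi> g g l)"
    proof -
      have "\<Phi> (x + g) g = (\<lambda>l. \<Phi> x g l + \<Phi> g g l)" by (rule ext) (rule Phi_add_left)
      then show ?thesis unfolding R_circle by simp
    qed
    also have "\<dots> = integral\<^sup>L circle_measure (\<Phi> x g) + integral\<^sup>L circle_measure (\<Phi> g g)"
      by (rule Bochner_Integration.integral_add) (simp_all add: circle_integral(1) mxg mgg Phi_cont)
    also have "integral\<^sup>L circle_measure (\<Phi> x g) = 0"
      using R_notG[OF xG] R_circle[of x g] by simp
    finally have "integral\<^sup>L circle_measure (\<Phi> g g) = 0" by simp
    then show ?thesis using R_circle g_def by simp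
  qed
  then have "complex_of_real (2 * (\<sigma> k)\<^sup>2) = 0" using Re_e_k by simp
  then show ?thesis by simp
qed

end




context cor_setup begin

definition hh :: real where "hh = pi / real n"
definition Gs :: "real \<Rightarrow> 'a" where "Gs t = F (t + hh)"
definition D :: "real \<Rightarrow> 'a" where "D t = F t - Gs t"
definition V :: "'a \<Rightarrow> 'a" where
  "V x = (1 / (2 * pi)) *\<^sub>R integral {0..2*pi} (\<lambda>t. cinner (F t) x *\<^sub>C F t)"

lemma hh_pos: "0 < hh" using n_pos by (simp add: hh_def)

lemma hh_le: "hh \<le> 2 * pi"
proof -
  have "real n \<ge> 1" using n_pos by simp
  then have "pi / real n \<le> pi" by (simp add: divide_le_eq)
  then show ?thesis unfolding hh_def using pi_gt_zero by linarith
qed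

lemma Gs_cont: "continuous_on S Gs"
  unfolding Gs_def by (intro continuous_on_compose2[OF F_cont] continuous_intros) auto

lemma D_cont: "continuous_on S D"
  unfolding D_def by (intro continuous_intros F_cont_on Gs_cont)

lemma D_bound: "norm (D t) \<le> CE * hh powr \<alpha>"
  using F_hoelder[of t "t + hh"] hh_pos by (simp add: D_def Gs_def)

lemma T_lin: "bounded_linear (T ^^ n)"
  by (rule bounded_clinear_bounded_linear[OF bounded_clinear_funpow[OF T_bounded]])

lemma T_clin: "clinear (T ^^ n)"
  using bounded_clinear_funpow[OF T_bounded] unfolding bounded_clinear_def by blast

lemma int_cont: "continuous_on {a..b} f \<Longrightarrow> f integrable_on {a..b}"
  for f :: "real \<Rightarrow> 'b::banach"
  by (rule integrable_continuous_interval)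

lemma R_eq_V: assumes "x \<in> G" shows "R x = V x"
proof (rule cinner_ext)
  fix y
  have m: "\<Phi> x y \<in> borel_measurable borel" using assms unfolding G_def by blast
  have iw: "(\<lambda>t. cinner (F t) x *\<^sub>C F t) integrable_on {0..2*pi}"
    by (intro int_cont continuous_intros F_cont_on)
  have "cinner (V x) y = complex_of_real (1 / (2 * pi)) * cinner (integral {0..2*pi} (\<lambda>t. cinner (F t) x *\<^sub>C F t)) y"
    unfolding V_def by (rule cinner_scaleR_left)
  also have "cinner (integral {0..2*pi} (\<lambda>t. cinner (F t) x *\<^sub>C F t)) y
     = integral {0..2*pi} ((\<lambda>v. cinner v y) \<circ> (\<lambda>t. cinner (F t) x *\<^sub>C F t))"
    by (rule integral_linear[OF iw bounded_linear_cinner_left, symmetric])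
  also have "\<dots> = integral {0..2*pi} (\<lambda>t. \<Phi> x y (cis t))"
  proof (rule integral_cong)
    fix t
    have cc: "cnj (cinner (F t) x) = cinner x (F t)" using cinner_commute[of x "F t"] by simp
    have cc2: "cnj (cinner y (F t)) = cinner (F t) y" using cinner_commute[of "F t" y] by simp
    show "((\<lambda>v. cinner v y) \<circ> (\<lambda>t. cinner (F t) x *\<^sub>C F t)) t = \<Phi> x y (cis t)"
      by (simp add: \<Phi>_def F_def[symmetric] cinner_scaleC_left cc cc2)
  qed
  finally have "cinner (V x) y = (1 / (2 * pi)) *\<^sub>R integral {0..2*pi} (\<lambda>t. \<Phi> x y (cis t))"
    by (simp add: scaleR_conv_of_real)
  then show "cinner (R x) y = cinner (V x) y" using R_meas[OF m] by simp
qed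

lemma cis_n_per: "cis (real n * (t + 2 * pi)) = cis (real n * t)"
proof -
  have "cis (real n * (t + 2 * pi)) = cis (real n * t) * cis (2 * pi * real n)"
    by (simp add: cis_mult algebra_simps)
  also have "cis (2 * pi * real n) = 1" by (rule cis_multiple_2pi) simp
  finally show ?thesis by simp
qed

lemma cis_n_shift: "cis (real n * (t + hh)) = - cis (real n * t)"
proof -
  have "real n * (t + hh) = real n * t + pi" using n_pos by (simp add: hh_def algebra_simps)
  moreover have "cis (real n * t) * cis pi = cis (real n * t + pi)" by (rule cis_mult)
  ultimately show ?thesis by simp
qed

definition P :: "'a \<Rightarrow> 'a" where
  "P x = integral {0..2*pi} (\<lambda>t. (cis (real n * t) * cinner (D t) x) *\<^sub>C F t)"
definition Q :: "'a \<Rightarrow> 'a" where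
  "Q x = integral {0..2*pi} (\<lambda>t. (cis (real n * t) * cinner (Gs t) x) *\<^sub>C D t)"

lemma W_formula: "(T ^^ n) (V x) = (1 / (2 * pi)) *\<^sub>R ((1 / 2) *\<^sub>R (P x + Q x))"
proof -
  define \<psi> where "\<psi> t = (cinner (F t) x * cis (real n * t)) *\<^sub>C F t" for t
  have cpsi: "continuous_on S \<psi>" for S unfolding \<psi>_def
    by (intro continuous_intros F_cont_on)
  have iw: "(\<lambda>t. cinner (F t) x *\<^sub>C F t) integrable_on {0..2*pi}"
    by (intro int_cont continuous_intros F_cont_on)
  have "(T ^^ n) (V x) = (1 / (2 * pi)) *\<^sub>R (T ^^ n) (integral {0..2*pi} (\<lambda>t. cinner (F t) x *\<^sub>C F t))"
    unfolding V_def by (rule clinear_scaleR[OF T_clin])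
  also have "(T ^^ n) (integral {0..2*pi} (\<lambda>t. cinner (F t) x *\<^sub>C F t))
      = integral {0..2*pi} ((T ^^ n) \<circ> (\<lambda>t. cinner (F t) x *\<^sub>C F t))"
    by (rule integral_linear[OF iw T_lin, symmetric])
  also have "\<dots> = integral {0..2*pi} \<psi>"
  proof (rule integral_cong)
    fix t
    have "(T ^^ n) (cinner (F t) x *\<^sub>C F t) = cinner (F t) x *\<^sub>C (T ^^ n) (F t)"
      using T_clin unfolding clinear_def by blast
    then show "((T ^^ n) \<circ> (\<lambda>t. cinner (F t) x *\<^sub>C F t)) t = \<psi> t"
      by (simp add: \<psi>_def T_pow_F scaleC_scaleC)
  qed
  also have "integral {0..2*pi} \<psi> = (1 / 2) *\<^sub>R (P x + Q x)"
  proof -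
    have per: "\<psi> (t + 2 * pi) = \<psi> t" for t
      by (simp add: \<psi>_def F_per cis_n_per)
    have sh: "integral {0..2*pi} (\<lambda>t. \<psi> (t + hh)) = integral {0..2*pi} \<psi>"
      by (rule periodic_shift[OF cpsi per]) (use hh_pos hh_le in auto)
    have pt: "\<psi> t + \<psi> (t + hh) = (cis (real n * t) * cinner (D t) x) *\<^sub>C F t
                + (cis (real n * t) * cinner (Gs t) x) *\<^sub>C D t" for t
    proof -
      have "\<psi> (t + hh) = (cinner (Gs t) x * cis (real n * (t + hh))) *\<^sub>C Gs t"
        by (simp only: \<psi>_def Gs_def)
      also have "\<dots> = - ((cinner (Gs t) x * cis (real n * t)) *\<^sub>C Gs t)"
        by (simp only: cis_n_shift mult_minus_right scaleC_minus_left)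
      finally have s1: "\<psi> (t + hh) = - ((cinner (Gs t) x * cis (real n * t)) *\<^sub>C Gs t)" .
      show ?thesis
        by (simp add: s1 \<psi>_def[of t] D_def cinner_diff_left scaleC_diff_left
          scaleC_diff_right algebra_simps)
    qed
    have i1: "(\<lambda>t. (cis (real n * t) * cinner (D t) x) *\<^sub>C F t) integrable_on {0..2*pi}"
      by (intro int_cont continuous_intros F_cont_on D_cont)
    have i2: "(\<lambda>t. (cis (real n * t) * cinner (Gs t) x) *\<^sub>C D t) integrable_on {0..2*pi}"
      by (intro int_cont continuous_intros Gs_cont D_cont)
    have i3: "(\<lambda>t. \<psi> (t + hh)) integrable_on {0..2*pi}"
      by (intro int_cont continuous_on_compose2[OF cpsi[of UNIV]] continuous_intros) auto
    have "integral {0..2*pi} \<psi> + integral {0..2*pi} \<psi>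
        = integral {0..2*pi} \<psi> + integral {0..2*pi} (\<lambda>t. \<psi> (t + hh))" by (simp add: sh)
    also have "\<dots> = integral {0..2*pi} (\<lambda>t. \<psi> t + \<psi> (t + hh))"
      by (rule Henstock_Kurzweil_Integration.integral_add[symmetric]) (intro int_cont cpsi, rule i3)
    also have "\<dots> = integral {0..2*pi} (\<lambda>t. (cis (real n * t) * cinner (D t) x) *\<^sub>C F t
                + (cis (real n * t) * cinner (Gs t) x) *\<^sub>C D t)"
      by (simp only: pt)
    also have "\<dots> = P x + Q x" unfolding P_def Q_def
      by (rule Henstock_Kurzweil_Integration.integral_add[OF i1 i2])
    finally have "P x + Q x = 2 *\<^sub>R integral {0..2*pi} \<psi>" by (simp add: scaleR_2)
    then show ?thesis by simp
  qed
  finally show ?thesis .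
qed

end




lemma sq_sum_le: "(a + b)\<^sup>2 \<le> 2 * (a\<^sup>2 + b\<^sup>2)" for a b :: real
proof -
  have "(a + b)\<^sup>2 + (a - b)\<^sup>2 = 2 * (a\<^sup>2 + b\<^sup>2)" by (simp add: power2_eq_square algebra_simps)
  moreover have "0 \<le> (a - b)\<^sup>2" by simp
  ultimately show ?thesis by linarith
qed

context cor_setup begin

lemma W_norm: "(norm ((T ^^ n) (V x)))\<^sup>2 \<le> ((norm (P x))\<^sup>2 + (norm (Q x))\<^sup>2) / (8 * pi\<^sup>2)"
proof -
  have "norm ((T ^^ n) (V x)) = norm (P x + Q x) / (4 * pi)"
    by (simp add: W_formula)
  then have "(norm ((T ^^ n) (V x)))\<^sup>2 = (norm (P x + Q x))\<^sup>2 / (16 * pi\<^sup>2)"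
    by (simp add: power_divide power_mult_distrib)
  also have "(norm (P x + Q x))\<^sup>2 \<le> 2 * ((norm (P x))\<^sup>2 + (norm (Q x))\<^sup>2)"
  proof -
    have "norm (P x + Q x) \<le> norm (P x) + norm (Q x)" by (rule norm_triangle_ineq)
    then have "(norm (P x + Q x))\<^sup>2 \<le> (norm (P x) + norm (Q x))\<^sup>2"
      by (intro power_mono) simp_all
    also have "\<dots> \<le> 2 * ((norm (P x))\<^sup>2 + (norm (Q x))\<^sup>2)"
      by (rule sq_sum_le)
    finally show ?thesis .
  qed
  then have "(norm (P x + Q x))\<^sup>2 / (16 * pi\<^sup>2) \<le> 2 * ((norm (P x))\<^sup>2 + (norm (Q x))\<^sup>2) / (16 * pi\<^sup>2)"
    by (intro divide_right_mono) simp_all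
  also have "\<dots> = ((norm (P x))\<^sup>2 + (norm (Q x))\<^sup>2) / (8 * pi\<^sup>2)" by (simp add: field_simps)
  finally show ?thesis .
qed

lemma P_bound: "(norm (P x))\<^sup>2 \<le> integral {0..2*pi} (\<lambda>t. (cmod (cinner (D t) x))\<^sup>2) * integral {0..2*pi} (\<lambda>t. (norm (F t))\<^sup>2)"
proof -
  have "(norm (P x))\<^sup>2 \<le> integral {0..2*pi} (\<lambda>t. (cmod (cis (real n * t) * cinner (D t) x))\<^sup>2) * integral {0..2*pi} (\<lambda>t. (norm (F t))\<^sup>2)"
    unfolding P_def by (rule norm_integral_scaleC) (intro continuous_intros D_cont F_cont_on)+
  then show ?thesis by (simp add: norm_mult)
qed

lemma Q_bound: "(norm (Q x))\<^sup>2 \<le> integral {0..2*pi} (\<lambda>t. (cmod (cinner (Gs t) x))\<^sup>2) * integral {0..2*pi} (\<lambda>t. (norm (D t))\<^sup>2)"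
proof -
  have "(norm (Q x))\<^sup>2 \<le> integral {0..2*pi} (\<lambda>t. (cmod (cis (real n * t) * cinner (Gs t) x))\<^sup>2) * integral {0..2*pi} (\<lambda>t. (norm (D t))\<^sup>2)"
    unfolding Q_def by (rule norm_integral_scaleC) (intro continuous_intros D_cont Gs_cont)+
  then show ?thesis by (simp add: norm_mult)
qed

lemma sum_bessel_int:
  assumes cH: "continuous_on UNIV (H :: real \<Rightarrow> 'a)"
  shows "(\<Sum>k<N. integral {0..2*pi} (\<lambda>t. (cmod (cinner (H t) (e k)))\<^sup>2)) \<le> integral {0..2*pi} (\<lambda>t. (norm (H t))\<^sup>2)"
proof -
  have cH': "continuous_on S H" for S using cH continuous_on_subset by blast
  have "(\<Sum>k<N. integral {0..2*pi} (\<lambda>t. (cmod (cinner (H t) (e k)))\<^sup>2))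
      = integral {0..2*pi} (\<lambda>t. \<Sum>k<N. (cmod (cinner (H t) (e k)))\<^sup>2)"
    by (rule integral_sum[symmetric]) (simp_all add: int_cont continuous_intros cH')
  also have "\<dots> \<le> integral {0..2*pi} (\<lambda>t. (norm (H t))\<^sup>2)"
  proof (rule integral_le)
    show "(\<lambda>t. \<Sum>k<N. (cmod (cinner (H t) (e k)))\<^sup>2) integrable_on {0..2*pi}"
      by (intro int_cont continuous_intros cH')
    show "(\<lambda>t. (norm (H t))\<^sup>2) integrable_on {0..2*pi}"
      by (intro int_cont continuous_intros cH')
    fix t
    have "(\<Sum>k<N. (cmod (cinner (H t) (e k)))\<^sup>2) = (\<Sum>k<N. (cmod (cinner (e k) (H t)))\<^sup>2)"
      by (rule sum.cong) (simp_all add: cinner_commute[of "H t"])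
    also have "\<dots> \<le> (norm (H t))\<^sup>2" by (rule bessel[OF e_orthonormal])
    finally show "(\<Sum>k<N. (cmod (cinner (H t) (e k)))\<^sup>2) \<le> (norm (H t))\<^sup>2" .
  qed
  finally show ?thesis .
qed

lemma Id_bound: "integral {0..2*pi} (\<lambda>t. (norm (D t))\<^sup>2) \<le> 2 * pi * (CE * hh powr \<alpha>)\<^sup>2"
proof -
  have "integral {0..2*pi} (\<lambda>t. (norm (D t))\<^sup>2) \<le> integral {0..2*pi} (\<lambda>t. (CE * hh powr \<alpha>)\<^sup>2)"
  proof (rule integral_le)
    show "(\<lambda>t. (norm (D t))\<^sup>2) integrable_on {0..2*pi}"
      by (intro int_cont continuous_intros D_cont)
    show "(\<lambda>t. (CE * hh powr \<alpha>)\<^sup>2) integrable_on {0..2*pi}" by (rule integrable_const_ivl)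
    fix t
    show "(norm (D t))\<^sup>2 \<le> (CE * hh powr \<alpha>)\<^sup>2"
      by (intro power_mono D_bound) simp
  qed
  also have "\<dots> = 2 * pi * (CE * hh powr \<alpha>)\<^sup>2" by simp
  finally show ?thesis .
qed

lemma Ig_eq: "integral {0..2*pi} (\<lambda>t. (norm (Gs t))\<^sup>2) = integral {0..2*pi} (\<lambda>t. (norm (F t))\<^sup>2)"
  unfolding Gs_def
  by (rule periodic_shift[of "\<lambda>t. (norm (F t))\<^sup>2"]) (use hh_pos hh_le in \<open>simp_all add: F_per continuous_intros F_cont\<close>)

lemma term_eq: assumes "e k \<in> G"
  shows "(\<sigma> k) ^ 4 * (norm ((T ^^ n) (e k)))\<^sup>2 = (norm ((T ^^ n) (V (e k))))\<^sup>2 / 4"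
proof -
  have "(T ^^ n) (V (e k)) = (T ^^ n) (complex_of_real (2 * (\<sigma> k)\<^sup>2) *\<^sub>C e k)"
    using R_eq_V[OF assms] e_eigen by simp
  also have "\<dots> = complex_of_real (2 * (\<sigma> k)\<^sup>2) *\<^sub>C (T ^^ n) (e k)"
    using T_clin unfolding clinear_def by blast
  finally have "norm ((T ^^ n) (V (e k))) = 2 * (\<sigma> k)\<^sup>2 * norm ((T ^^ n) (e k))"
    by (simp add: norm_scaleC norm_power)
  then show ?thesis by (simp add: power_mult_distrib)
qed

lemma partial_bound:
  assumes allG: "\<forall>k. e k \<in> G"
  shows "(\<Sum>k<N. (\<sigma> k) ^ 4 * (norm ((T ^^ n) (e k)))\<^sup>2)
     \<le> (CE * hh powr \<alpha>)\<^sup>2 * integral {0..2*pi} (\<lambda>t. (norm (F t))\<^sup>2) / (8 * pi)"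
proof -
  define If where "If = integral {0..2*pi} (\<lambda>t. (norm (F t))\<^sup>2)"
  define Id where "Id = integral {0..2*pi} (\<lambda>t. (norm (D t))\<^sup>2)"
  have If0: "0 \<le> If" unfolding If_def
    by (rule integral_nonneg) (intro int_cont continuous_intros F_cont_on, simp)
  have Id0: "0 \<le> Id" unfolding Id_def
    by (rule integral_nonneg) (intro int_cont continuous_intros D_cont, simp)
  have sP: "(\<Sum>k<N. (norm (P (e k)))\<^sup>2) \<le> If * Id"
  proof -
    have "(\<Sum>k<N. (norm (P (e k)))\<^sup>2) \<le> (\<Sum>k<N. integral {0..2*pi} (\<lambda>t. (cmod (cinner (D t) (e k)))\<^sup>2) * If)"
      unfolding If_def by (intro sum_mono P_bound)
    also have "\<dots> = If * (\<Sum>k<N. integral {0..2*pi} (\<lambda>t. (cmod (cinner (D t) (e k)))\<^sup>2))"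
      by (simp add: sum_distrib_left mult.commute)
    also have "\<dots> \<le> If * Id" unfolding Id_def
      by (intro mult_left_mono sum_bessel_int If0 D_cont)
    finally show ?thesis .
  qed
  have sQ: "(\<Sum>k<N. (norm (Q (e k)))\<^sup>2) \<le> If * Id"
  proof -
    have "(\<Sum>k<N. (norm (Q (e k)))\<^sup>2) \<le> (\<Sum>k<N. integral {0..2*pi} (\<lambda>t. (cmod (cinner (Gs t) (e k)))\<^sup>2) * Id)"
      unfolding Id_def by (intro sum_mono Q_bound)
    also have "\<dots> = Id * (\<Sum>k<N. integral {0..2*pi} (\<lambda>t. (cmod (cinner (Gs t) (e k)))\<^sup>2))"
      by (simp add: sum_distrib_left mult.commute)
    also have "\<dots> \<le> Id * integral {0..2*pi} (\<lambda>t. (norm (Gs t))\<^sup>2)"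
      by (intro mult_left_mono sum_bessel_int Id0 Gs_cont)
    also have "\<dots> = If * Id" by (simp add: Ig_eq If_def)
    finally show ?thesis .
  qed
  have "(\<Sum>k<N. (\<sigma> k) ^ 4 * (norm ((T ^^ n) (e k)))\<^sup>2) = (\<Sum>k<N. (norm ((T ^^ n) (V (e k))))\<^sup>2 / 4)"
    by (rule sum.cong) (use allG term_eq in auto)
  also have "\<dots> \<le> (\<Sum>k<N. ((norm (P (e k)))\<^sup>2 + (norm (Q (e k)))\<^sup>2) / (32 * pi\<^sup>2))"
  proof (rule sum_mono)
    fix k
    have "(norm ((T ^^ n) (V (e k))))\<^sup>2 / 4 \<le> (((norm (P (e k)))\<^sup>2 + (norm (Q (e k)))\<^sup>2) / (8 * pi\<^sup>2)) / 4"
      by (intro divide_right_mono W_norm) simp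
    then show "(norm ((T ^^ n) (V (e k))))\<^sup>2 / 4 \<le> ((norm (P (e k)))\<^sup>2 + (norm (Q (e k)))\<^sup>2) / (32 * pi\<^sup>2)"
      by simp
  qed
  also have "\<dots> = ((\<Sum>k<N. (norm (P (e k)))\<^sup>2) + (\<Sum>k<N. (norm (Q (e k)))\<^sup>2)) / (32 * pi\<^sup>2)"
    by (simp add: sum_divide_distrib[symmetric] sum.distrib)
  also have "\<dots> \<le> (If * Id + If * Id) / (32 * pi\<^sup>2)"
    by (intro divide_right_mono add_mono sP sQ) simp
  also have "\<dots> = If * Id / (16 * pi\<^sup>2)" by simp
  also have "\<dots> \<le> If * (2 * pi * (CE * hh powr \<alpha>)\<^sup>2) / (16 * pi\<^sup>2)"
    unfolding Id_def by (intro divide_right_mono mult_left_mono Id_bound If0) simp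
  also have "\<dots> = (CE * hh powr \<alpha>)\<^sup>2 * If / (8 * pi)"
    by (simp add: power2_eq_square field_simps)
  finally show ?thesis unfolding If_def .
qed

lemma E_norm_meas:
  assumes allG: "\<forall>k. e k \<in> G"
  shows "(\<lambda>l. (norm (E l))\<^sup>2) \<in> borel_measurable borel"
proof (rule borel_measurable_LIMSEQ_real)
  fix l :: complex
  show "(\<lambda>m. \<Sum>j<m. Re (\<Phi> (e j) (e j) l)) \<longlonglongrightarrow> (norm (E l))\<^sup>2"
  proof -
    have "Re (\<Phi> (e j) (e j) l) = (cmod (cinner (e j) (E l)))\<^sup>2" for j
      by (simp add: \<Phi>_def complex_norm_square[symmetric] del: of_real_power)
    then show ?thesis using parseval[OF e_orthonormal e_basis, of "E l"] by simp
  qed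
next
  fix m
  have "\<Phi> (e j) (e j) \<in> borel_measurable borel" for j using allG unfolding G_def by blast
  then show "(\<lambda>l. \<Sum>j<m. Re (\<Phi> (e j) (e j) l)) \<in> borel_measurable borel"
    by measurable
qed

lemma main:
  "summable (\<lambda>k. (\<sigma> k) ^ 4 * (norm ((T ^^ n) (e k)))\<^sup>2)
         \<and> (\<Sum>k. (\<sigma> k) ^ 4 * (norm ((T ^^ n) (e k)))\<^sup>2)
             \<le> CE\<^sup>2 * pi powr (2 * \<alpha>) / (4 * real n powr (2 * \<alpha>))
                * integral\<^sup>L circle_measure (\<lambda>l. (norm (E l))\<^sup>2)"
proof -
  define K where "K = CE\<^sup>2 * pi powr (2 * \<alpha>) / (4 * real n powr (2 * \<alpha>))
                * integral\<^sup>L circle_measure (\<lambda>l. (norm (E l))\<^sup>2)"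
  define a where "a k = (\<sigma> k) ^ 4 * (norm ((T ^^ n) (e k)))\<^sup>2" for k
  have a0: "0 \<le> a k" for k unfolding a_def by simp
  have bound: "(\<Sum>k<N. a k) \<le> K" for N
  proof (cases "\<forall>k. e k \<in> G")
    case False
    then obtain j where "e j \<notin> G" by blast
    then have "\<sigma> k = 0" for k using caseB by blast
    then have "(\<Sum>k<N. a k) = 0" by (simp add: a_def)
    moreover have "0 \<le> K" unfolding K_def
      by (intro mult_nonneg_nonneg divide_nonneg_nonneg integral_nonneg_AE) simp_all
    ultimately show ?thesis by simp
  next
    case True
    have "integral\<^sup>L circle_measure (\<lambda>l. (norm (E l))\<^sup>2) = (1 / (2 * pi)) *\<^sub>R integral {0..2*pi} (\<lambda>t. (norm (E (cis t)))\<^sup>2)"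
      by (rule circle_integral(2)[OF E_norm_meas[OF True]])
        (simp add: F_def[symmetric] continuous_intros F_cont_on)
    then have iE: "integral\<^sup>L circle_measure (\<lambda>l. (norm (E l))\<^sup>2) = integral {0..2*pi} (\<lambda>t. (norm (F t))\<^sup>2) / (2 * pi)"
      by (simp add: F_def)
    have hp: "(hh powr \<alpha>)\<^sup>2 = pi powr (2 * \<alpha>) / real n powr (2 * \<alpha>)"
    proof -
      have "(hh powr \<alpha>)\<^sup>2 = hh powr (2 * \<alpha>)"
        by (simp add: power2_eq_square powr_add[symmetric])
      also have "\<dots> = pi powr (2 * \<alpha>) / real n powr (2 * \<alpha>)" by (simp add: hh_def powr_divide)
      finally show ?thesis .
    qed
    have "(\<Sum>k<N. a k) \<le> (CE * hh powr \<alpha>)\<^sup>2 * integral {0..2*pi} (\<lambda>t. (norm (F t))\<^sup>2) / (8 * pi)"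
      unfolding a_def by (rule partial_bound[OF True])
    also have "\<dots> = K" unfolding K_def iE
      by (simp add: power_mult_distrib hp field_simps)
    finally show ?thesis .
  qed
  have sa: "summable a"
  proof (rule bounded_imp_summable[OF a0])
    fix m
    have "(\<Sum>k\<le>m. a k) = (\<Sum>k<Suc m. a k)" by (simp only: lessThan_Suc_atMost)
    also have "\<dots> \<le> K" by (rule bound)
    finally show "(\<Sum>k\<le>m. a k) \<le> K" .
  qed
  moreover have "suminf a \<le> K" by (rule suminf_le_const[OF sa bound])
  ultimately show ?thesis unfolding a_def[abs_def] K_def by simp
qed

end


theorem corollary5p10:
  fixes T :: "'a::chilbert_space \<Rightarrow> 'a"
    and E :: "complex \<Rightarrow> 'a"
    and R :: "'a \<Rightarrow> 'a"
    and e :: "nat \<Rightarrow> 'a"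
    and \<sigma> :: "nat \<Rightarrow> real"
    and CE \<alpha> :: real
    and n :: nat
  assumes T_bounded: "bounded_clinear T"
    and E_bounded: "\<exists>B. \<forall>l\<in>sphere 0 1. norm (E l) \<le> B"
    and E_eigen: "\<forall>l\<in>sphere 0 1. T (E l) = l *\<^sub>C E l"
    and E_spanning: "\<forall>A \<in> sets circle_measure. A \<subseteq> sphere 0 1 \<longrightarrow>
                        measure circle_measure A = 1 \<longrightarrow> closure (cspan (E ` A)) = UNIV"
    and \<alpha>_pos: "0 < \<alpha>" and \<alpha>_le1: "\<alpha> \<le> 1"
    and E_hoelder: "\<forall>\<theta> \<theta>'. norm (E (cis \<theta>) - E (cis \<theta>')) \<le> CE * \<bar>\<theta> - \<theta>'\<bar> powr \<alpha>"
    and R_def: "\<forall>x y. cinner (R x) y =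
                  integral\<^sup>L circle_measure (\<lambda>l. cinner x (E l) * cnj (cinner y (E l)))"
    and e_orthonormal: "\<forall>j k. cinner (e j) (e k) = (if j = k then 1 else 0)"
    and e_basis: "closure (cspan (range e)) = UNIV"
    and e_eigen: "\<forall>k. R (e k) = complex_of_real (2 * (\<sigma> k)\<^sup>2) *\<^sub>C e k"
    and n_pos: "0 < n"
  shows "summable (\<lambda>k. (\<sigma> k) ^ 4 * (norm ((T ^^ n) (e k)))\<^sup>2)
         \<and> (\<Sum>k. (\<sigma> k) ^ 4 * (norm ((T ^^ n) (e k)))\<^sup>2)
             \<le> CE\<^sup>2 * pi powr (2 * \<alpha>) / (4 * real n powr (2 * \<alpha>))
                * integral\<^sup>L circle_measure (\<lambda>l. (norm (E l))\<^sup>2)"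
  by (rule cor_setup.main[OF cor_setup.intro[OF T_bounded E_eigen \<alpha>_pos E_hoelder R_def
        e_orthonormal e_basis e_eigen n_pos]])

end
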